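(* The logic $\mathsf{HLC}^\flat=\mathsf{ICK}\oplus(p\mathrel{\Box\!\!\!\rightarrow} p)\oplus(((p\mathrel{\Box\!\!\!\rightarrow} q)\wedge(q\mathrel{\Box\!\!\!\rightarrow} r))\to(p\mathrel{\Box\!\!\!\rightarrow} r))$ is sound and complete with respect to the class of conditional frames $(X,\leq,\mathcal{R})$ satisfying, for all $x\in X$ and upsets $a,b$: $R_a[x]\subseteq a$, and $R_a[x]\subseteq b$ implies $R_a[x]\subseteq{\uparrow}R_b[x]$.
   Context: Formulas: $\phi ::= p\mid\bot\mid\phi\wedge\phi\mid\phi\vee\phi\mid\phi\to\phi\mid\phi\mathrel{\Box\!\!\!\rightarrow}\phi$. $\mathsf{ICK}\oplus\Gamma$ is the smallest set containing intuitionistic propositional logic, $\Gamma$, $(p\mathrel{\Box\!\!\!\rightarrow}(q\wedge r))\leftrightarrow((p\mathrel{\Box\!\!\!\rightarrow} q)\wedge(p\mathrel{\Box\!\!\!\rightarrow} r))$ and $(p\mathrel{\Box\!\!\!\rightarrow}\top)\leftrightarrow\top$, closed under uniform substitution, modus ponens and congruence rules for both arguments of $\mathrel{\Box\!\!\!\rightarrow}$. A conditional frame is $(X,\leq,\mathcal{R})$, $(X,\leq)$ a nonempty preorder, $\mathcal{R}=\{R_a\mid a\text{ an upset}\}$ with $(\leq\circ R_a)\subseteq(R_a\circ\leq)$; valuations assign upsets to letters and $x\models\phi\mathrel{\Box\!\!\!\rightarrow}\psi$ iff every $y$ with $xR_{V(\phi)}y$ satisfies $\psi$. *)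

theory Defs
  imports Main
begin

datatype fm = Var nat | Bot | And fm fm | Or fm fm | Imp fm fm | Cond fm fm

definition Top :: fm where "Top = Imp Bot Bot"
definition Iff :: "fm \<Rightarrow> fm \<Rightarrow> fm" where "Iff A B = And (Imp A B) (Imp B A)"

fun subst :: "(nat \<Rightarrow> fm) \<Rightarrow> fm \<Rightarrow> fm" where
  "subst s (Var p) = s p"
| "subst s Bot = Bot"
| "subst s (And A B) = And (subst s A) (subst s B)"
| "subst s (Or A B) = Or (subst s A) (subst s B)"
| "subst s (Imp A B) = Imp (subst s A) (subst s B)"
| "subst s (Cond A B) = Cond (subst s A) (subst s B)"

inductive ipc_axiom :: "fm \<Rightarrow> bool" where
  "ipc_axiom (Imp A (Imp B A))"
| "ipc_axiom (Imp (Imp A (Imp B C)) (Imp (Imp A B) (Imp A C)))"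
| "ipc_axiom (Imp (And A B) A)"
| "ipc_axiom (Imp (And A B) B)"
| "ipc_axiom (Imp A (Imp B (And A B)))"
| "ipc_axiom (Imp A (Or A B))"
| "ipc_axiom (Imp B (Or A B))"
| "ipc_axiom (Imp (Imp A C) (Imp (Imp B C) (Imp (Or A B) C)))"
| "ipc_axiom (Imp Bot A)"

inductive ICK :: "fm set \<Rightarrow> fm \<Rightarrow> bool" for \<Gamma> :: "fm set" where
  ipc: "ipc_axiom A \<Longrightarrow> ICK \<Gamma> A"
| extra: "A \<in> \<Gamma> \<Longrightarrow> ICK \<Gamma> A"
| cond_and: "ICK \<Gamma> (Iff (Cond (Var 0) (And (Var 1) (Var 2)))
                        (And (Cond (Var 0) (Var 1)) (Cond (Var 0) (Var 2))))"
| cond_top: "ICK \<Gamma> (Iff (Cond (Var 0) Top) Top)"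
| usubst: "ICK \<Gamma> A \<Longrightarrow> ICK \<Gamma> (subst s A)"
| mp: "ICK \<Gamma> (Imp A B) \<Longrightarrow> ICK \<Gamma> A \<Longrightarrow> ICK \<Gamma> B"
| cong_left: "ICK \<Gamma> (Iff A B) \<Longrightarrow> ICK \<Gamma> (Iff (Cond A C) (Cond B C))"
| cong_right: "ICK \<Gamma> (Iff A B) \<Longrightarrow> ICK \<Gamma> (Iff (Cond C A) (Cond C B))"

definition HLC_flat_axioms :: "fm set" where
  "HLC_flat_axioms =
    {Cond (Var 0) (Var 0),
     Imp (And (Cond (Var 0) (Var 1)) (Cond (Var 1) (Var 2))) (Cond (Var 0) (Var 2))}"

abbreviation HLC_flat :: "fm \<Rightarrow> bool" where
  "HLC_flat \<equiv> ICK HLC_flat_axioms"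

text \<open>A frame is given by a carrier X, a relation le (the preorder) and a
 family R, where R a is the relation R_a (only relevant for upsets a).\<close>

definition upset :: "'w set \<Rightarrow> ('w \<Rightarrow> 'w \<Rightarrow> bool) \<Rightarrow> 'w set \<Rightarrow> bool" where
  "upset X le a \<longleftrightarrow> a \<subseteq> X \<and> (\<forall>x\<in>a. \<forall>y\<in>X. le x y \<longrightarrow> y \<in> a)"

definition up :: "'w set \<Rightarrow> ('w \<Rightarrow> 'w \<Rightarrow> bool) \<Rightarrow> 'w set \<Rightarrow> 'w set" where
  "up X le S = {y \<in> X. \<exists>s\<in>S. le s y}"

definition cond_frame ::
  "'w set \<Rightarrow> ('w \<Rightarrow> 'w \<Rightarrow> bool) \<Rightarrow> ('w set \<Rightarrow> 'w \<Rightarrow> 'w \<Rightarrow> bool) \<Rightarrow> bool" where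
  "cond_frame X le R \<longleftrightarrow>
     X \<noteq> {} \<and>
     (\<forall>x\<in>X. le x x) \<and>
     (\<forall>x\<in>X. \<forall>y\<in>X. \<forall>z\<in>X. le x y \<longrightarrow> le y z \<longrightarrow> le x z) \<and>
     (\<forall>x y. le x y \<longrightarrow> x \<in> X \<and> y \<in> X) \<and>
     (\<forall>a. upset X le a \<longrightarrow> (\<forall>x y. R a x y \<longrightarrow> x \<in> X \<and> y \<in> X)) \<and>
     (\<forall>a. upset X le a \<longrightarrow>
        (\<forall>x y z. le x y \<longrightarrow> R a y z \<longrightarrow> (\<exists>w. R a x w \<and> le w z)))"

fun sat :: "'w set \<Rightarrow> ('w \<Rightarrow> 'w \<Rightarrow> bool) \<Rightarrow> ('w set \<Rightarrow> 'w \<Rightarrow> 'w \<Rightarrow> bool)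
            \<Rightarrow> (nat \<Rightarrow> 'w set) \<Rightarrow> 'w \<Rightarrow> fm \<Rightarrow> bool" where
  "sat X le R V x (Var p) = (x \<in> V p)"
| "sat X le R V x Bot = False"
| "sat X le R V x (And A B) = (sat X le R V x A \<and> sat X le R V x B)"
| "sat X le R V x (Or A B) = (sat X le R V x A \<or> sat X le R V x B)"
| "sat X le R V x (Imp A B) =
     (\<forall>y\<in>X. le x y \<longrightarrow> sat X le R V y A \<longrightarrow> sat X le R V y B)"
| "sat X le R V x (Cond A B) =
     (\<forall>y. R {z \<in> X. sat X le R V z A} x y \<longrightarrow> sat X le R V y B)"

definition valid_in_frame ::
  "'w set \<Rightarrow> ('w \<Rightarrow> 'w \<Rightarrow> bool) \<Rightarrow> ('w set \<Rightarrow> 'w \<Rightarrow> 'w \<Rightarrow> bool) \<Rightarrow> fm \<Rightarrow> bool" where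
  "valid_in_frame X le R A \<longleftrightarrow>
     (\<forall>V. (\<forall>p. upset X le (V p)) \<longrightarrow> (\<forall>x\<in>X. sat X le R V x A))"

definition HLC_flat_frame ::
  "'w set \<Rightarrow> ('w \<Rightarrow> 'w \<Rightarrow> bool) \<Rightarrow> ('w set \<Rightarrow> 'w \<Rightarrow> 'w \<Rightarrow> bool) \<Rightarrow> bool" where
  "HLC_flat_frame X le R \<longleftrightarrow>
     cond_frame X le R \<and>
     (\<forall>x\<in>X. \<forall>a. upset X le a \<longrightarrow> {y. R a x y} \<subseteq> a) \<and>
     (\<forall>x\<in>X. \<forall>a b. upset X le a \<longrightarrow> upset X le b \<longrightarrow>
        {y. R a x y} \<subseteq> b \<longrightarrow> {y. R a x y} \<subseteq> up X le {y. R b x y})"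

end

theory Submission
  imports Defs
begin


abbreviation T where "T \<equiv> HLC_flat"

lemma T_ax: "ipc_axiom A \<Longrightarrow> T A" by (rule ICK.ipc)
lemma T_mp: "T (Imp A B) \<Longrightarrow> T A \<Longrightarrow> T B" by (rule ICK.mp)

lemma T_K: "T (Imp A (Imp B A))" by (intro T_ax ipc_axiom.intros)
lemma T_S: "T (Imp (Imp A (Imp B C)) (Imp (Imp A B) (Imp A C)))" by (intro T_ax ipc_axiom.intros)

lemma T_id: "T (Imp A A)"
proof -
  have "T (Imp (Imp A (Imp (Imp A A) A)) (Imp (Imp A (Imp A A)) (Imp A A)))" by (rule T_S)
  then have "T (Imp (Imp A (Imp A A)) (Imp A A))" using T_K T_mp by metis
  then show ?thesis using T_K T_mp by metis
qed

lemma T_Kmp: "T A \<Longrightarrow> T (Imp B A)" by (rule T_mp[OF T_K])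

lemma T_lift: "T (Imp A B) \<Longrightarrow> T (Imp (Imp y A) (Imp y B))"
  by (rule T_mp[OF T_S], rule T_Kmp)

lemma T_comp: "T (Imp A B) \<Longrightarrow> T (Imp B C) \<Longrightarrow> T (Imp A C)"
  by (rule T_mp[OF T_lift])

fun imps :: "fm list \<Rightarrow> fm \<Rightarrow> fm" where
  "imps [] B = B" | "imps (x # xs) B = Imp x (imps xs B)"

lemma imps_append[simp]: "imps (xs @ ys) B = imps xs (imps ys B)"
  by (induction xs) auto

lemma L1: "T B \<Longrightarrow> T (imps xs B)"
  by (induction xs) (auto intro: T_Kmp)

lemma L2_int: "T (Imp (imps xs (Imp B C)) (Imp (imps xs B) (imps xs C)))"
proof (induction xs)
  case Nil show ?case by (simp add: T_id)
next
  case (Cons y ys)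
  then have "T (Imp (Imp y (imps ys (Imp B C))) (Imp y (Imp (imps ys B) (imps ys C))))"
    by (rule T_lift)
  then show ?case using T_S T_comp by simp
qed

lemma L2: "T (imps xs (Imp B C)) \<Longrightarrow> T (imps xs B) \<Longrightarrow> T (imps xs C)"
  using L2_int T_mp by blast

lemma Kstar: "T (Imp a (imps xs a))"
proof (induction xs)
  case Nil then show ?case by (simp add: T_id)
next
  case (Cons x xs) then show ?case using T_comp[OF _ T_K] by simp
qed

lemma M: "x \<in> set ys \<Longrightarrow> T (imps ys x)"
proof (induction ys)
  case Nil then show ?case by simp
next
  case (Cons y ys) then show ?case using Kstar T_Kmp by auto
qed

lemma G': "T (imps ys (imps xs b)) \<Longrightarrow> (\<forall>x\<in>set xs. T (imps ys x)) \<Longrightarrow> T (imps ys b)"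
proof (induction xs arbitrary: b)
  case Nil then show ?case by simp
next
  case (Cons x xs)
  then have "T (imps ys (imps xs b))" using L2[of ys x "imps xs b"] by simp
  then show ?case using Cons by simp
qed

lemma W: "set xs \<subseteq> set zs \<Longrightarrow> T (imps xs c) \<Longrightarrow> T (imps zs c)"
  using G'[of zs xs c] L1 M by blast

definition der :: "fm set \<Rightarrow> fm \<Rightarrow> bool" where
  "der G c \<longleftrightarrow> (\<exists>xs. set xs \<subseteq> G \<and> T (imps xs c))"

lemma der_T: "T c \<Longrightarrow> der G c"
  unfolding der_def by (rule exI[of _ "[]"]) simp

lemma der_mem: "c \<in> G \<Longrightarrow> der G c"
  unfolding der_def by (rule exI[of _ "[c]"]) (simp add: T_id)

lemma der_mp: "der G (Imp a b) \<Longrightarrow> der G a \<Longrightarrow> der G b"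
proof -
  assume "der G (Imp a b)" "der G a"
  then obtain xs ys where "set xs \<subseteq> G" "T (imps xs (Imp a b))" "set ys \<subseteq> G" "T (imps ys a)"
    unfolding der_def by blast
  then have "T (imps (xs @ ys) (Imp a b))" "T (imps (xs @ ys) a)"
    using W[of xs "xs@ys"] W[of ys "xs@ys"] by auto
  then have "T (imps (xs @ ys) b)" using L2 by blast
  then show ?thesis unfolding der_def using \<open>set xs \<subseteq> G\<close> \<open>set ys \<subseteq> G\<close>
    by (intro exI[of _ "xs@ys"]) auto
qed

lemma der_mono: "der G c \<Longrightarrow> G \<subseteq> H \<Longrightarrow> der H c"
  unfolding der_def by blast

lemma deduction: "der (insert a G) b \<Longrightarrow> der G (Imp a b)"
proof -
  assume "der (insert a G) b"
  then obtain xs where xs: "set xs \<subseteq> insert a G" "T (imps xs b)" unfolding der_def by blast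
  let ?ys = "filter (\<lambda>z. z \<noteq> a) xs"
  have "set xs \<subseteq> set (?ys @ [a])" using xs(1) by auto
  then have "T (imps (?ys @ [a]) b)" using W xs(2) by blast
  then show ?thesis unfolding der_def using xs(1) by (intro exI[of _ ?ys]) auto
qed




definition closed :: "fm set \<Rightarrow> bool" where "closed G \<longleftrightarrow> (\<forall>c. der G c \<longrightarrow> c \<in> G)"
definition prime :: "fm set \<Rightarrow> bool" where "prime G \<longleftrightarrow> (\<forall>a b. Or a b \<in> G \<longrightarrow> a \<in> G \<or> b \<in> G)"
definition World :: "fm set \<Rightarrow> bool" where "World G \<longleftrightarrow> closed G \<and> Bot \<notin> G \<and> prime G"

lemma der_ax: "ipc_axiom A \<Longrightarrow> der G A" by (rule der_T, rule T_ax)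

lemma lindenbaum:
  assumes nd: "\<not> der G c"
  shows "\<exists>D. G \<subseteq> D \<and> World D \<and> c \<notin> D"
proof -
  let ?A = "{D. G \<subseteq> D \<and> \<not> der D c}"
  have "\<exists>M\<in>?A. \<forall>X\<in>?A. M \<subseteq> X \<longrightarrow> X = M"
  proof (rule subset_Zorn_nonempty)
    show "?A \<noteq> {}" using nd by blast
  next
    fix C assume C: "C \<noteq> {}" "subset.chain ?A C"
    have "G \<subseteq> \<Union>C" using C unfolding subset.chain_def by blast
    moreover have "\<not> der (\<Union>C) c"
    proof
      assume "der (\<Union>C) c"
      then obtain xs where xs: "set xs \<subseteq> \<Union>C" "T (imps xs c)" unfolding der_def by blast
      obtain B where "B \<in> C" "set xs \<subseteq> B"
        using finite_subset_Union_chain[OF _ xs(1) C(1) C(2)] by blast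
      then have "der B c" using xs(2) unfolding der_def by blast
      then show False using \<open>B \<in> C\<close> C(2) unfolding subset.chain_def by blast
    qed
    ultimately show "\<Union>C \<in> ?A" by blast
  qed
  then obtain M where M0: "M \<in> ?A" and max0: "\<forall>X\<in>?A. M \<subseteq> X \<longrightarrow> X = M"
    by (elim bexE)
  have M: "G \<subseteq> M" "\<not> der M c" using M0 by simp_all
  have max: "X = M" if "G \<subseteq> X" "\<not> der X c" "M \<subseteq> X" for X
    using max0 that by simp
  have ins: "der (insert d M) c" if "d \<notin> M" for d
  proof (rule ccontr)
    assume "\<not> der (insert d M) c"
    then have "insert d M = M" using max[of "insert d M"] M(1) by blast
    then show False using that by blast
  qed
  have cl: "closed M"
    unfolding closed_def
  proof (intro allI impI)
    fix d assume "der M d"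
    show "d \<in> M"
    proof (rule ccontr)
      assume "d \<notin> M"
      then have "der M (Imp d c)" using ins deduction by blast
      then show False using der_mp[OF _ \<open>der M d\<close>] M(2) by blast
    qed
  qed
  have bot: "Bot \<notin> M"
  proof
    assume "Bot \<in> M"
    then have "der M c" using der_mp[OF der_ax[OF ipc_axiom.intros(9)] der_mem] by blast
    then show False using M(2) by blast
  qed
  have pr: "prime M"
    unfolding prime_def
  proof (intro allI impI)
    fix a b assume ab: "Or a b \<in> M"
    show "a \<in> M \<or> b \<in> M"
    proof (rule ccontr)
      assume "\<not> (a \<in> M \<or> b \<in> M)"
      then have "der M (Imp a c)" "der M (Imp b c)" using ins deduction by blast+
      moreover have "der M (Imp (Imp a c) (Imp (Imp b c) (Imp (Or a b) c)))"
        by (rule der_ax) (rule ipc_axiom.intros)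
      ultimately have "der M (Imp (Or a b) c)" using der_mp by metis
      then have "der M c" using der_mp der_mem[OF ab] by blast
      then show False using M(2) by blast
    qed
  qed
  have "c \<notin> M" using M(2) der_mem by blast
  then show ?thesis using M(1) cl bot pr unfolding World_def by blast
qed




lemma T_and: "T A \<Longrightarrow> T B \<Longrightarrow> T (And A B)"
  using T_mp[OF T_mp[OF T_ax[OF ipc_axiom.intros(5)]]] by blast
lemma T_andE1: "T (And A B) \<Longrightarrow> T A" by (rule T_mp[OF T_ax[OF ipc_axiom.intros(3)]])
lemma T_andE2: "T (And A B) \<Longrightarrow> T B" by (rule T_mp[OF T_ax[OF ipc_axiom.intros(4)]])
lemma T_iff1: "T (Iff A B) \<Longrightarrow> T (Imp A B)" unfolding Iff_def by (rule T_andE1)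
lemma T_iff2: "T (Iff A B) \<Longrightarrow> T (Imp B A)" unfolding Iff_def by (rule T_andE2)

definition sub3 :: "fm \<Rightarrow> fm \<Rightarrow> fm \<Rightarrow> nat \<Rightarrow> fm" where
  "sub3 A B C = (\<lambda>n. if n = 0 then A else if n = 1 then B else C)"

lemma T_sub3: "T F \<Longrightarrow> T (subst (sub3 A B C) F)" by (rule ICK.usubst)

lemma cond_and_inst: "T (Iff (Cond C (And A B)) (And (Cond C A) (Cond C B)))"
  using T_sub3[OF ICK.cond_and, of C A B] by (simp add: sub3_def Iff_def)

lemma cond_top_inst: "T (Iff (Cond C Top) Top)"
  using T_sub3[OF ICK.cond_top, of C C C] by (simp add: sub3_def Iff_def Top_def)

lemma cond_id: "T (Cond A A)"
  using T_sub3[OF ICK.extra[of "Cond (Var 0) (Var 0)"], of A A A] by (simp add: sub3_def HLC_flat_axioms_def)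

lemma cond_trans: "T (Imp (And (Cond A B) (Cond B C)) (Cond A C))"
  using T_sub3[OF ICK.extra[of "Imp (And (Cond (Var 0) (Var 1)) (Cond (Var 1) (Var 2))) (Cond (Var 0) (Var 2))"], of A B C]
  by (simp add: sub3_def HLC_flat_axioms_def)

lemma cond_mono: "T (Imp A B) \<Longrightarrow> T (Imp (Cond C A) (Cond C B))"
proof -
  assume h: "T (Imp A B)"
  have "T (Imp A (And A B))"
    using T_mp[OF T_mp[OF T_S T_ax[OF ipc_axiom.intros(5)]] h] .
  moreover have "T (Imp (And A B) A)" by (rule T_ax[OF ipc_axiom.intros(3)])
  ultimately have "T (Iff A (And A B))" unfolding Iff_def by (rule T_and)
  then have "T (Iff (Cond C A) (Cond C (And A B)))" by (rule ICK.cong_right)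
  then have 1: "T (Imp (Cond C A) (Cond C (And A B)))" by (rule T_iff1)
  have 2: "T (Imp (Cond C (And A B)) (And (Cond C A) (Cond C B)))" by (rule T_iff1[OF cond_and_inst])
  have 3: "T (Imp (And (Cond C A) (Cond C B)) (Cond C B))" by (rule T_ax[OF ipc_axiom.intros(4)])
  show ?thesis by (rule T_comp[OF T_comp[OF 1 2] 3])
qed

lemma cond_nec: "T A \<Longrightarrow> T (Cond C A)"
proof -
  assume "T A"
  then have "T (Imp Top A)" by (rule T_Kmp)
  then have "T (Imp (Cond C Top) (Cond C A))" by (rule cond_mono)
  moreover have "T (Cond C Top)"
    using T_mp[OF T_iff2[OF cond_top_inst]] T_id unfolding Top_def by blast
  ultimately show ?thesis by (rule T_mp)
qed

lemma cond_and_intro: "T (Imp (And (Cond C A) (Cond C B)) (Cond C (And A B)))"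
  by (rule T_iff2[OF cond_and_inst])

lemma T_app: "T (Imp (And (Imp x c) x) c)"
proof -
  let ?P = "And (Imp x c) x"
  have a: "T (Imp ?P (Imp x c))" by (rule T_ax[OF ipc_axiom.intros(3)])
  have b: "T (Imp ?P x)" by (rule T_ax[OF ipc_axiom.intros(4)])
  show ?thesis by (rule T_mp[OF T_mp[OF T_S a] b])
qed

lemma w_T: "World W \<Longrightarrow> T a \<Longrightarrow> a \<in> W"
  unfolding World_def closed_def using der_T by blast
lemma w_mp: "World W \<Longrightarrow> Imp a b \<in> W \<Longrightarrow> a \<in> W \<Longrightarrow> b \<in> W"
  unfolding World_def closed_def using der_mp der_mem by blast
lemma w_Timp: "World W \<Longrightarrow> T (Imp a b) \<Longrightarrow> a \<in> W \<Longrightarrow> b \<in> W"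
  using w_T w_mp by blast
lemma w_and: "World W \<Longrightarrow> And a b \<in> W \<longleftrightarrow> a \<in> W \<and> b \<in> W"
proof
  assume "World W" "And a b \<in> W"
  then show "a \<in> W \<and> b \<in> W"
    using w_Timp[OF _ T_ax[OF ipc_axiom.intros(3)]] w_Timp[OF _ T_ax[OF ipc_axiom.intros(4)]] by blast
next
  assume "World W" "a \<in> W \<and> b \<in> W"
  then show "And a b \<in> W"
    using w_mp[OF _ w_Timp[OF _ T_ax[OF ipc_axiom.intros(5)]]] by blast
qed
lemma w_or: "World W \<Longrightarrow> Or a b \<in> W \<longleftrightarrow> a \<in> W \<or> b \<in> W"
proof
  assume "World W" "Or a b \<in> W"
  then show "a \<in> W \<or> b \<in> W" unfolding World_def prime_def by blast
next
  assume "World W" "a \<in> W \<or> b \<in> W"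
  then show "Or a b \<in> W"
    using w_Timp[OF _ T_ax[OF ipc_axiom.intros(6)]] w_Timp[OF _ T_ax[OF ipc_axiom.intros(7)]] by blast
qed
lemma w_bot: "World W \<Longrightarrow> Bot \<notin> W" unfolding World_def by blast

lemma w_CMP: "World W \<Longrightarrow> Cond f (Imp x c) \<in> W \<Longrightarrow> Cond f x \<in> W \<Longrightarrow> Cond f c \<in> W"
proof -
  assume W: "World W" "Cond f (Imp x c) \<in> W" "Cond f x \<in> W"
  then have "And (Cond f (Imp x c)) (Cond f x) \<in> W" using w_and by blast
  then have "Cond f (And (Imp x c) x) \<in> W" using w_Timp[OF W(1) cond_and_intro] by blast
  then show ?thesis using w_Timp[OF W(1) cond_mono[OF T_app]] by blast
qed

lemma w_CL: "World W \<Longrightarrow> \<forall>x\<in>set xs. Cond f x \<in> W \<Longrightarrow> Cond f (imps xs c) \<in> W \<Longrightarrow> Cond f c \<in> W"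
proof (induction xs)
  case Nil then show ?case by simp
next
  case (Cons x xs)
  then have "Cond f (imps xs c) \<in> W" using w_CMP[OF Cons.prems(1)] by simp
  then show ?case using Cons by simp
qed

definition sec :: "fm set \<Rightarrow> fm \<Rightarrow> fm set" where "sec w f = {g. Cond f g \<in> w}"

lemma L: "World w \<Longrightarrow> (\<forall>u. World u \<longrightarrow> sec w f \<subseteq> u \<longrightarrow> c \<in> u) \<Longrightarrow> Cond f c \<in> w"
proof -
  assume w: "World w" and all: "\<forall>u. World u \<longrightarrow> sec w f \<subseteq> u \<longrightarrow> c \<in> u"
  have "der (sec w f) c"
  proof (rule ccontr)
    assume "\<not> der (sec w f) c"
    then obtain u where "sec w f \<subseteq> u" "World u" "c \<notin> u" using lindenbaum by blast
    then show False using all by blast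
  qed
  then obtain xs where xs: "set xs \<subseteq> sec w f" "T (imps xs c)" unfolding der_def by blast
  have "Cond f (imps xs c) \<in> w" using w_T[OF w cond_nec[OF xs(2)]] .
  moreover have "\<forall>x\<in>set xs. Cond f x \<in> w" using xs(1) unfolding sec_def by blast
  ultimately show ?thesis using w_CL[OF w] by blast
qed




definition Xc :: "fm set set" where "Xc = {W. World W}"
definition lec :: "fm set \<Rightarrow> fm set \<Rightarrow> bool" where "lec x y \<longleftrightarrow> x \<in> Xc \<and> y \<in> Xc \<and> x \<subseteq> y"
definition Rc :: "fm set set \<Rightarrow> fm set \<Rightarrow> fm set \<Rightarrow> bool" where
  "Rc a x z \<longleftrightarrow> x \<in> Xc \<and> z \<in> Xc \<and>
     (\<exists>f. \<exists>w\<in>Xc. x \<subseteq> w \<and> (\<forall>u\<in>Xc. sec w f \<subseteq> u \<longrightarrow> u \<in> a) \<and> sec w f \<subseteq> z)"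
definition Vc :: "nat \<Rightarrow> fm set set" where "Vc p = {W \<in> Xc. Var p \<in> W}"

lemma Rc_char: "G \<in> Xc \<Longrightarrow> Rc {z \<in> Xc. a \<in> z} G y \<longleftrightarrow> y \<in> Xc \<and> sec G a \<subseteq> y"
proof
  assume G: "G \<in> Xc" and R: "Rc {z \<in> Xc. a \<in> z} G y"
  then obtain f w where w: "w \<in> Xc" "G \<subseteq> w" "\<forall>u\<in>Xc. sec w f \<subseteq> u \<longrightarrow> u \<in> {z \<in> Xc. a \<in> z}" "sec w f \<subseteq> y"
    and y: "y \<in> Xc" unfolding Rc_def by blast
  have wW: "World w" using w(1) unfolding Xc_def by simp
  have "Cond f a \<in> w" using L[OF wW] w(3) unfolding Xc_def by blast
  have "sec G a \<subseteq> y"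
  proof
    fix g assume "g \<in> sec G a"
    then have "Cond a g \<in> w" using w(2) unfolding sec_def by blast
    then have "And (Cond f a) (Cond a g) \<in> w" using w_and[OF wW] \<open>Cond f a \<in> w\<close> by blast
    then have "Cond f g \<in> w" using w_Timp[OF wW cond_trans] by blast
    then show "g \<in> y" using w(4) unfolding sec_def by blast
  qed
  then show "y \<in> Xc \<and> sec G a \<subseteq> y" using y by blast
next
  assume G: "G \<in> Xc" and y: "y \<in> Xc \<and> sec G a \<subseteq> y"
  have GW: "World G" using G unfolding Xc_def by simp
  have "Cond a a \<in> G" using w_T[OF GW cond_id] .
  then have "\<forall>u\<in>Xc. sec G a \<subseteq> u \<longrightarrow> u \<in> {z \<in> Xc. a \<in> z}" unfolding sec_def by blast
  then show "Rc {z \<in> Xc. a \<in> z} G y" unfolding Rc_def using G y by blast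
qed

lemma truth: "G \<in> Xc \<Longrightarrow> sat Xc lec Rc Vc G A \<longleftrightarrow> A \<in> G"
proof (induction A arbitrary: G)
  case (Var p) then show ?case by (simp add: Vc_def)
next
  case Bot then show ?case using w_bot[of G] unfolding Xc_def by simp
next
  case (And a b) then show ?case using w_and[of G a b] unfolding Xc_def by simp
next
  case (Or a b) then show ?case using w_or[of G a b] unfolding Xc_def by simp
next
  case (Imp a b)
  have GW: "World G" using Imp.prems unfolding Xc_def by simp
  have lec_iff: "lec G y \<longleftrightarrow> G \<subseteq> y" if "y \<in> Xc" for y using that Imp.prems by (simp add: lec_def)
  have "sat Xc lec Rc Vc G (Imp a b) \<longleftrightarrow> (\<forall>y\<in>Xc. G \<subseteq> y \<longrightarrow> sat Xc lec Rc Vc y a \<longrightarrow> sat Xc lec Rc Vc y b)"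
    using lec_iff by auto
  also have "\<dots> \<longleftrightarrow> (\<forall>y\<in>Xc. G \<subseteq> y \<longrightarrow> a \<in> y \<longrightarrow> b \<in> y)"
    using Imp.IH by auto
  also have "\<dots> \<longleftrightarrow> Imp a b \<in> G"
  proof
    assume all: "\<forall>y\<in>Xc. G \<subseteq> y \<longrightarrow> a \<in> y \<longrightarrow> b \<in> y"
    show "Imp a b \<in> G"
    proof (rule ccontr)
      assume nI: "Imp a b \<notin> G"
      have "\<not> der (insert a G) b"
      proof
        assume "der (insert a G) b"
        then have "der G (Imp a b)" by (rule deduction)
        then show False using nI GW unfolding World_def closed_def by blast
      qed
      then obtain D where "insert a G \<subseteq> D" "World D" "b \<notin> D" using lindenbaum by blast
      then show False using all unfolding Xc_def by blast
    qed
  next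
    assume "Imp a b \<in> G"
    then show "\<forall>y\<in>Xc. G \<subseteq> y \<longrightarrow> a \<in> y \<longrightarrow> b \<in> y"
      using w_mp unfolding Xc_def by blast
  qed
  finally show ?case .
next
  case (Cond a b)
  have GW: "World G" using Cond.prems unfolding Xc_def by simp
  have eq: "{z \<in> Xc. sat Xc lec Rc Vc z a} = {z \<in> Xc. a \<in> z}" using Cond.IH(1) by auto
  have "sat Xc lec Rc Vc G (Cond a b) \<longleftrightarrow> (\<forall>y. Rc {z \<in> Xc. a \<in> z} G y \<longrightarrow> sat Xc lec Rc Vc y b)"
    by (simp add: eq)
  also have "\<dots> \<longleftrightarrow> (\<forall>y\<in>Xc. sec G a \<subseteq> y \<longrightarrow> b \<in> y)"
    using Rc_char[OF Cond.prems] Cond.IH(2) by auto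
  also have "\<dots> \<longleftrightarrow> Cond a b \<in> G"
  proof
    assume "\<forall>y\<in>Xc. sec G a \<subseteq> y \<longrightarrow> b \<in> y"
    then show "Cond a b \<in> G" using L[OF GW] unfolding Xc_def by blast
  next
    assume "Cond a b \<in> G"
    then show "\<forall>y\<in>Xc. sec G a \<subseteq> y \<longrightarrow> b \<in> y" unfolding sec_def by blast
  qed
  finally show ?case .
qed

lemma can_frame: "Xc \<noteq> {} \<Longrightarrow> HLC_flat_frame Xc lec Rc"
proof -
  assume ne: "Xc \<noteq> {}"
  have cf: "cond_frame Xc lec Rc"
    unfolding cond_frame_def
  proof (intro conjI)
    show "\<forall>a. upset Xc lec a \<longrightarrow> (\<forall>x y z. lec x y \<longrightarrow> Rc a y z \<longrightarrow> (\<exists>w. Rc a x w \<and> lec w z))"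
    proof (intro allI impI)
      fix a x y z assume "lec x y" "Rc a y z"
      then obtain f w where fw: "w \<in> Xc" "y \<subseteq> w" "\<forall>u\<in>Xc. sec w f \<subseteq> u \<longrightarrow> u \<in> a" "sec w f \<subseteq> z"
        and xyz: "x \<in> Xc" "x \<subseteq> y" "z \<in> Xc" unfolding Rc_def lec_def by blast
      then have "x \<subseteq> w" by (rule_tac subset_trans)
      then have "Rc a x z \<and> lec z z" unfolding Rc_def lec_def using fw xyz by blast
      then show "\<exists>w. Rc a x w \<and> lec w z" by blast
    qed
  next
    show "Xc \<noteq> {}" by (rule ne)
  next
    show "\<forall>x\<in>Xc. lec x x" unfolding lec_def by blast
  next
    show "\<forall>x\<in>Xc. \<forall>y\<in>Xc. \<forall>z\<in>Xc. lec x y \<longrightarrow> lec y z \<longrightarrow> lec x z" unfolding lec_def by blast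
  next
    show "\<forall>x y. lec x y \<longrightarrow> x \<in> Xc \<and> y \<in> Xc" unfolding lec_def by blast
  next
    show "\<forall>a. upset Xc lec a \<longrightarrow> (\<forall>x y. Rc a x y \<longrightarrow> x \<in> Xc \<and> y \<in> Xc)" unfolding Rc_def by blast
  qed
  have c1: "\<forall>x\<in>Xc. \<forall>a. upset Xc lec a \<longrightarrow> {y. Rc a x y} \<subseteq> a"
    unfolding Rc_def by blast
  have c2: "\<forall>x\<in>Xc. \<forall>a b. upset Xc lec a \<longrightarrow> upset Xc lec b \<longrightarrow>
        {y. Rc a x y} \<subseteq> b \<longrightarrow> {y. Rc a x y} \<subseteq> up Xc lec {y. Rc b x y}"
  proof (intro ballI allI impI subsetI)
    fix x a b z assume sub: "{y. Rc a x y} \<subseteq> b" and z: "z \<in> {y. Rc a x y}"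
    then obtain f w where fw: "w \<in> Xc" "x \<subseteq> w" "\<forall>u\<in>Xc. sec w f \<subseteq> u \<longrightarrow> u \<in> a" "sec w f \<subseteq> z"
      and xz: "x \<in> Xc" "z \<in> Xc" unfolding Rc_def by blast
    have "\<forall>u\<in>Xc. sec w f \<subseteq> u \<longrightarrow> u \<in> b"
    proof (intro ballI impI)
      fix u assume "u \<in> Xc" "sec w f \<subseteq> u"
      then have "Rc a x u" unfolding Rc_def using fw xz by blast
      then show "u \<in> b" using sub by blast
    qed
    then have "Rc b x z" unfolding Rc_def using fw xz by blast
    then show "z \<in> up Xc lec {y. Rc b x y}" unfolding up_def lec_def using xz by blast
  qed
  show ?thesis unfolding HLC_flat_frame_def using cf c1 c2 by blast
qed

lemma completeness:
  assumes "\<forall>(X :: fm set set) le R. HLC_flat_frame X le R \<longrightarrow> valid_in_frame X le R A"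
  shows "HLC_flat A"
proof (rule ccontr)
  assume nA: "\<not> HLC_flat A"
  have "\<not> der {} A"
  proof
    assume "der {} A"
    then obtain xs where "set xs \<subseteq> {}" "T (imps xs A)" unfolding der_def by blast
    then show False using nA by simp
  qed
  then obtain D where D: "World D" "A \<notin> D" using lindenbaum by blast
  then have DX: "D \<in> Xc" unfolding Xc_def by simp
  then have "HLC_flat_frame Xc lec Rc" using can_frame by blast
  then have "valid_in_frame Xc lec Rc A" using assms by blast
  moreover have "\<forall>p. upset Xc lec (Vc p)"
    unfolding upset_def Vc_def lec_def by blast
  ultimately have "sat Xc lec Rc Vc D A" unfolding valid_in_frame_def using DX by blast
  then show False using truth[OF DX] D(2) by blast
qed




context
  fixes X :: "'w set" and le R
  assumes cf: "cond_frame X le R"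
begin

lemma le_refl: "x \<in> X \<Longrightarrow> le x x" using cf unfolding cond_frame_def by blast
lemma le_X: "le x y \<Longrightarrow> x \<in> X \<and> y \<in> X" using cf unfolding cond_frame_def by blast
lemma le_trans: "le x y \<Longrightarrow> le y z \<Longrightarrow> le x z"
proof -
  assume a: "le x y" "le y z"
  then have "x \<in> X" "y \<in> X" "z \<in> X" using le_X by blast+
  then show ?thesis using a cf unfolding cond_frame_def by blast
qed
lemma R_X: "upset X le a \<Longrightarrow> R a x y \<Longrightarrow> x \<in> X \<and> y \<in> X"
  using cf unfolding cond_frame_def by blast
lemma R_mono: "upset X le a \<Longrightarrow> le x y \<Longrightarrow> R a y z \<Longrightarrow> \<exists>w. R a x w \<and> le w z"
  using cf unfolding cond_frame_def by blast

lemma pers: "\<forall>p. upset X le (V p) \<Longrightarrow> le x y \<Longrightarrow> sat X le R V x A \<Longrightarrow> sat X le R V y A"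
proof (induction A arbitrary: x y)
  case (Var p)
  then show ?case using le_X unfolding upset_def by auto
next
  case (Imp A B)
  then show ?case using le_trans le_X by auto
next
  case (Cond A B)
  have up: "upset X le {z \<in> X. sat X le R V z A}"
    unfolding upset_def using Cond.IH(1) Cond.prems(1) by blast
  show ?case
  proof (simp, intro allI impI)
    fix z assume "R {z \<in> X. sat X le R V z A} y z"
    then obtain w where "R {z \<in> X. sat X le R V z A} x w" "le w z"
      using R_mono[OF up Cond.prems(2)] by blast
    then show "sat X le R V z B" using Cond.IH(2)[OF Cond.prems(1)] Cond.prems(3) by simp
  qed
qed auto

lemma upset_sat:
  assumes V: "\<forall>p. upset X le (V p)" shows "upset X le {z \<in> X. sat X le R V z A}"
proof -
  have "\<forall>x\<in>{z \<in> X. sat X le R V z A}. \<forall>y\<in>X. le x y \<longrightarrow> y \<in> {z \<in> X. sat X le R V z A}"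
    using pers[OF V] by blast
  then show ?thesis unfolding upset_def by blast
qed

lemma subst_lemma:
  assumes V: "\<forall>p. upset X le (V p)"
  shows "x \<in> X \<Longrightarrow> sat X le R V x (subst s A) = sat X le R (\<lambda>p. {z \<in> X. sat X le R V z (s p)}) x A"
proof (induction A arbitrary: x)
  case (Cond A B)
  let ?V' = "\<lambda>p. {z \<in> X. sat X le R V z (s p)}"
  have V': "\<forall>p. upset X le (?V' p)" using upset_sat[OF V] by blast
  have eq: "{z \<in> X. sat X le R V z (subst s A)} = {z \<in> X. sat X le R ?V' z A}"
    using Cond.IH(1) by auto
  have "\<forall>y. R {z \<in> X. sat X le R ?V' z A} x y \<longrightarrow> y \<in> X"
    using R_X[OF upset_sat[OF V']] by blast
  then have "\<forall>y. R {z \<in> X. sat X le R ?V' z A} x y \<longrightarrow> (sat X le R V y (subst s B) \<longleftrightarrow> sat X le R ?V' y B)"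
    using Cond.IH(2) by blast
  then show ?case unfolding subst.simps sat.simps eq by blast
next
  case (Imp A B)
  then show ?case by simp
qed simp_all

end

lemma iff_sat: "sat X le R V x (Iff A B) \<longleftrightarrow>
  (\<forall>y\<in>X. le x y \<longrightarrow> (sat X le R V y A \<longleftrightarrow> sat X le R V y B))"
  unfolding Iff_def by auto

lemma soundness:
  assumes "HLC_flat A" and fr: "HLC_flat_frame X le R"
  shows "valid_in_frame X le R A"
proof -
  have cf: "cond_frame X le R" using fr unfolding HLC_flat_frame_def by blast
  note P = pers[OF cf] and LT = le_trans[OF cf] and LR = le_refl[OF cf] and LX = le_X[OF cf]
  have c1: "\<forall>x\<in>X. \<forall>a. upset X le a \<longrightarrow> {y. R a x y} \<subseteq> a"
    and c2: "\<forall>x\<in>X. \<forall>a b. upset X le a \<longrightarrow> upset X le b \<longrightarrow>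
        {y. R a x y} \<subseteq> b \<longrightarrow> {y. R a x y} \<subseteq> up X le {y. R b x y}"
    using fr unfolding HLC_flat_frame_def by blast+
  show ?thesis
  using assms(1)
proof (induction A rule: ICK.induct)
  case (ipc A)
  show ?case unfolding valid_in_frame_def
  proof (intro allI impI ballI)
    fix V :: "nat \<Rightarrow> _" and x assume V: "\<forall>p. upset X le (V p)" and x: "x \<in> X"
    from ipc show "sat X le R V x A"
    proof (cases rule: ipc_axiom.cases)
      case (1 A B) then show ?thesis using P[OF V] by auto
    next
      case (2 A B C)
      have "sat X le R V u C" if "le x y" "sat X le R V y (Imp A (Imp B C))" "le y z"
        "sat X le R V z (Imp A B)" "le z u" "sat X le R V u A" for y z u
      proof -
        have u: "u \<in> X" using LX[OF that(5)] by blast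
        have yu: "le y u" using LT[OF that(3) that(5)] .
        have "sat X le R V u B" using that(4,5,6) u LR[OF u] by simp
        moreover have "sat X le R V u (Imp B C)" using that(2) yu u that(6) by simp
        ultimately show ?thesis using u LR[OF u] by simp
      qed
      then show ?thesis using 2 by simp
    next
      case (3 A B) then show ?thesis by auto
    next
      case (4 A B) then show ?thesis by auto
    next
      case (5 A B) then show ?thesis using P[OF V] by auto
    next
      case (6 A B) then show ?thesis by auto
    next
      case (7 A B) then show ?thesis by auto
    next
      case (8 A C B)
      have "sat X le R V u C" if "le x y" "sat X le R V y (Imp A C)" "le y z"
        "sat X le R V z (Imp B C)" "le z u" "sat X le R V u (Or A B)" for y z u
      proof -
        have u: "u \<in> X" using LX[OF that(5)] by blast
        have yu: "le y u" using LT[OF that(3) that(5)] .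
        show ?thesis using that(2,4,5,6) yu u by auto
      qed
      then show ?thesis using 8 by simp
    next
      case (9 A) then show ?thesis by auto
    qed
  qed
next
  case (extra A)
  show ?case unfolding valid_in_frame_def
  proof (intro allI impI ballI)
    fix V :: "nat \<Rightarrow> _" and x assume V: "\<forall>p. upset X le (V p)" and x: "x \<in> X"
    have VX: "{z \<in> X. z \<in> V p} = V p" for p using V unfolding upset_def by blast
    from extra consider "A = Cond (Var 0) (Var 0)"
      | "A = Imp (And (Cond (Var 0) (Var 1)) (Cond (Var 1) (Var 2))) (Cond (Var 0) (Var 2))"
      unfolding HLC_flat_axioms_def by blast
    then show "sat X le R V x A"
    proof cases
      case 1
      then show ?thesis using c1 x V by (auto simp: VX)
    next
      case 2
      have "z \<in> V 2" if h: "y \<in> X" "le x y" "\<forall>z. R (V 0) y z \<longrightarrow> z \<in> V 1"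
         "\<forall>z. R (V 1) y z \<longrightarrow> z \<in> V 2" "R (V 0) y z" for y z
      proof -
        have "{y'. R (V 0) y y'} \<subseteq> V 1" using h(3) by blast
        then have "{y'. R (V 0) y y'} \<subseteq> up X le {y'. R (V 1) y y'}"
          using c2 h(1) V by blast
        then obtain t where t: "R (V 1) y t" "le t z" "z \<in> X" using h(5) unfolding up_def by blast
        have "t \<in> V 2" using t(1) h(4) by blast
        then show ?thesis using t V unfolding upset_def by blast
      qed
      then show ?thesis using 2 by (simp add: VX)
    qed
  qed
next
  case cond_and
  then show ?case unfolding valid_in_frame_def Iff_def by auto
next
  case cond_top
  then show ?case unfolding valid_in_frame_def Iff_def Top_def by auto
next
  case (usubst A s)
  show ?case unfolding valid_in_frame_def
  proof (intro allI impI ballI)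
    fix V :: "nat \<Rightarrow> _" and x assume V: "\<forall>p. upset X le (V p)" and x: "x \<in> X"
    have V': "\<forall>p. upset X le {z \<in> X. sat X le R V z (s p)}" using upset_sat[OF cf V] by blast
    have "sat X le R (\<lambda>p. {z \<in> X. sat X le R V z (s p)}) x A"
      using usubst.IH[unfolded valid_in_frame_def, THEN spec[where x="\<lambda>p. {z \<in> X. sat X le R V z (s p)}"]] V' x by blast
    then show "sat X le R V x (subst s A)" using subst_lemma[OF cf V x] by simp
  qed
next
  case (mp A B)
  show ?case unfolding valid_in_frame_def
  proof (intro allI impI ballI)
    fix V :: "nat \<Rightarrow> _" and x assume V: "\<forall>p. upset X le (V p)" and x: "x \<in> X"
    have "sat X le R V x (Imp A B)" "sat X le R V x A"
      using mp.IH V x unfolding valid_in_frame_def by blast+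
    then show "sat X le R V x B" using LR[OF x] x by simp
  qed
next
  case (cong_left A B C)
  show ?case unfolding valid_in_frame_def
  proof (intro allI impI ballI)
    fix V :: "nat \<Rightarrow> _" and x assume V: "\<forall>p. upset X le (V p)" and x: "x \<in> X"
    have "\<forall>z\<in>X. sat X le R V z (Iff A B)" using cong_left.IH V unfolding valid_in_frame_def by blast
    then have "\<forall>z\<in>X. sat X le R V z A \<longleftrightarrow> sat X le R V z B" using LR unfolding iff_sat by blast
    then have eq: "{z \<in> X. sat X le R V z A} = {z \<in> X. sat X le R V z B}" by blast
    show "sat X le R V x (Iff (Cond A C) (Cond B C))" unfolding iff_sat by (simp add: eq)
  qed
next
  case (cong_right A B C)
  show ?case unfolding valid_in_frame_def
  proof (intro allI impI ballI)
    fix V :: "nat \<Rightarrow> _" and x assume V: "\<forall>p. upset X le (V p)" and x: "x \<in> X"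
    have "\<forall>z\<in>X. sat X le R V z (Iff A B)" using cong_right.IH V unfolding valid_in_frame_def by blast
    then have ab: "\<forall>z\<in>X. sat X le R V z A \<longleftrightarrow> sat X le R V z B" using LR unfolding iff_sat by blast
    have "\<forall>z. R {z \<in> X. sat X le R V z C} y z \<longrightarrow> z \<in> X" for y
      using R_X[OF cf upset_sat[OF cf V]] by blast
    then show "sat X le R V x (Iff (Cond C A) (Cond C B))" unfolding iff_sat using ab by auto
  qed
qed
qed


theorem theorem5p10:
  shows "(\<forall>A (X :: 'w set) le R. HLC_flat A \<longrightarrow> HLC_flat_frame X le R \<longrightarrow> valid_in_frame X le R A)
       \<and> (\<forall>A. (\<forall>(X :: fm set set) le R. HLC_flat_frame X le R \<longrightarrow> valid_in_frame X le R A)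
              \<longrightarrow> HLC_flat A)"
proof (intro conjI allI impI)
  fix A and X :: "'w set" and le R
  assume "HLC_flat A" "HLC_flat_frame X le R"
  then show "valid_in_frame X le R A" by (rule soundness)
next
  fix A
  assume "\<forall>(X :: fm set set) le R. HLC_flat_frame X le R \<longrightarrow> valid_in_frame X le R A"
  then show "HLC_flat A" by (rule completeness)
qed

end
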